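(* There is a universal constant $u<5$ such that for every context $\psi$ (and every $n$, $m$ and choice of $\Phi$), the Vapnik–Chervonenkis dimension of $\mathcal{H}_\psi$ satisfies $$\mathrm{VC}(\mathcal{H}_\psi)\le u\,(2m+1).$$
   Context: Let $X_1,\dots,X_n$ be Boolean variables; an assignment is $x\in\{0,1\}^n$. Fix a set of candidate Boolean formulas $\Phi=\{\phi_1,\dots,\phi_m\}$ over these variables. For $c\in\{0,1\}^m$ let $\phi(c)=\bigwedge_{j:\,c_j=1}\phi_j$ (the hard constraints; the empty conjunction is "true"). For $w\in[-1,1]^m$ let $f_w(x)=\sum_{j=1}^m w_j\,\mathbb{1}[x\models\phi_j]$. A context $\psi$ is a Boolean formula over $X_1,\dots,X_n$. The MAX-SAT classifier with parameters $(c,w)$ is $h_{c,w}(x,\psi)=1$ if $x\in\arg\max_{x'\models\phi(c)\wedge\psi} f_w(x')$ (i.e. $x\models\phi(c)\wedge\psi$ and $f_w(x)\ge f_w(x')$ for all $x'\models\phi(c)\wedge\psi$), and $h_{c,w}(x,\psi)=0$ otherwise. Let $\mathcal{H}=\{h_{c,w}: c\in\{0,1\}^m, w\in[-1,1]^m\}$ and, for a fixed context $\psi$, $\mathcal{H}_\psi=\{x\mapsto h(x,\psi): h\in\mathcal{H}\}$, a class of binary classifiers on $\{0,1\}^n$. *)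

theory Defs
  imports Complex_Main
begin

text \<open>A Boolean formula over
X_1..X_n is represented by its semantics, a predicate on assignments
(every Boolean function on {0,1}^n is expressible by a formula).
The candidate formulas Phi are a list of length m.\<close>

definition assignments :: "nat \<Rightarrow> bool list set" where
  "assignments n = {x. length x = n}"

definition hard :: "(bool list \<Rightarrow> bool) list \<Rightarrow> (nat \<Rightarrow> bool) \<Rightarrow> bool list \<Rightarrow> bool" where
  "hard Phi c x = (\<forall>j<length Phi. c j \<longrightarrow> (Phi ! j) x)"

definition fw :: "(bool list \<Rightarrow> bool) list \<Rightarrow> (nat \<Rightarrow> real) \<Rightarrow> bool list \<Rightarrow> real" where
  "fw Phi w x = (\<Sum>j<length Phi. w j * (if (Phi ! j) x then 1 else 0))"

definition maxsat_clf ::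
  "nat \<Rightarrow> (bool list \<Rightarrow> bool) list \<Rightarrow> (nat \<Rightarrow> bool) \<Rightarrow> (nat \<Rightarrow> real)
    \<Rightarrow> bool list \<Rightarrow> (bool list \<Rightarrow> bool) \<Rightarrow> bool" where
  "maxsat_clf n Phi c w x psi =
     (x \<in> assignments n \<and> hard Phi c x \<and> psi x \<and>
      (\<forall>x' \<in> assignments n. hard Phi c x' \<and> psi x' \<longrightarrow> fw Phi w x' \<le> fw Phi w x))"

definition H_ctx :: "nat \<Rightarrow> (bool list \<Rightarrow> bool) list \<Rightarrow> (bool list \<Rightarrow> bool) \<Rightarrow> (bool list \<Rightarrow> bool) set" where
  "H_ctx n Phi psi = {(\<lambda>x. maxsat_clf n Phi c w x psi) | c w.
       \<forall>j<length Phi. -1 \<le> w j \<and> w j \<le> 1}"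

definition shatters :: "('a \<Rightarrow> bool) set \<Rightarrow> 'a set \<Rightarrow> bool" where
  "shatters H S = (\<forall>T \<subseteq> S. \<exists>h\<in>H. \<forall>x\<in>S. h x = (x \<in> T))"

definition VC_dim :: "'a set \<Rightarrow> ('a \<Rightarrow> bool) set \<Rightarrow> nat" where
  "VC_dim D H = Sup {card S | S. S \<subseteq> D \<and> finite S \<and> shatters H S}"

end

theory Submission
  imports Defs
begin

lemma lin_dep:
  fixes a :: "'a \<Rightarrow> nat \<Rightarrow> real"
  assumes "finite I" "k < card I"
  shows "\<exists>l. (\<exists>i\<in>I. l i \<noteq> 0) \<and> (\<forall>j<k. (\<Sum>i\<in>I. l i * a i j) = 0)"
  using assms
proof (induction k arbitrary: I a)
  case 0
  then have "I \<noteq> {}" by auto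
  then show ?case by (intro exI[of _ "\<lambda>_. 1"]) auto
next
  case (Suc k)
  show ?case
  proof (cases "\<exists>i\<in>I. a i k \<noteq> 0")
    case False
    obtain l where l: "\<exists>i\<in>I. l i \<noteq> 0" "\<forall>j<k. (\<Sum>i\<in>I. l i * a i j) = 0"
      using Suc.IH[of I a] Suc.prems by auto
    have "\<forall>j<Suc k. (\<Sum>i\<in>I. l i * a i j) = 0"
    proof (intro allI impI)
      fix j assume "j < Suc k"
      then consider "j < k" | "j = k" by linarith
      then show "(\<Sum>i\<in>I. l i * a i j) = 0"
        by cases (use l False in auto)
    qed
    then show ?thesis using l by blast
  next
    case True
    then obtain i0 where i0: "i0 \<in> I" "a i0 k \<noteq> 0" by blast
    define I' where "I' = I - {i0}"
    define b where "b i j = a i j - a i k / a i0 k * a i0 j" for i j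
    have fI': "finite I'" using Suc.prems I'_def by auto
    have cI': "k < card I'" using Suc.prems i0 I'_def by auto
    obtain mu where mu: "\<exists>i\<in>I'. mu i \<noteq> 0" "\<forall>j<k. (\<Sum>i\<in>I'. mu i * b i j) = 0"
      using Suc.IH[OF fI' cI', of b] by blast
    define l where "l i = (if i = i0 then - (\<Sum>i\<in>I'. mu i * a i k) / a i0 k else mu i)" for i
    have key: "(\<Sum>i\<in>I. l i * a i j) = (\<Sum>i\<in>I'. mu i * b i j)" for j
    proof -
      have "(\<Sum>i\<in>I. l i * a i j) = l i0 * a i0 j + (\<Sum>i\<in>I'. l i * a i j)"
        unfolding I'_def using i0 Suc.prems by (simp add: sum.remove)
      also have "(\<Sum>i\<in>I'. l i * a i j) = (\<Sum>i\<in>I'. mu i * a i j)"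
        by (rule sum.cong) (auto simp: l_def I'_def)
      also have "(\<Sum>i\<in>I'. mu i * b i j) = (\<Sum>i\<in>I'. mu i * a i j) - (\<Sum>i\<in>I'. mu i * a i k) / a i0 k * a i0 j"
        by (simp add: b_def algebra_simps sum_subtractf sum_distrib_left sum_divide_distrib sum_distrib_right)
      ultimately show ?thesis by (simp add: l_def)
    qed
    have "\<forall>j<Suc k. (\<Sum>i\<in>I. l i * a i j) = 0"
    proof (intro allI impI)
      fix j assume "j < Suc k"
      then consider "j < k" | "j = k" by linarith
      then show "(\<Sum>i\<in>I. l i * a i j) = 0"
      proof cases
        case 1 then show ?thesis using key mu by simp
      next
        case 2 then show ?thesis using key i0 by (simp add: b_def)
      qed
    qed
    moreover have "\<exists>i\<in>I. l i \<noteq> 0" using mu(1) by (auto simp: l_def I'_def)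
    ultimately show ?thesis by blast
  qed
qed

lemma zero_terms:
  fixes f :: "'a \<Rightarrow> real"
  assumes "finite A" "\<forall>x\<in>A. 0 \<le> f x" "sum f A = 0" "x \<in> A"
  shows "f x = 0"
  using assms by (simp add: sum_nonneg_eq_0_iff)

lemma shattered_bound:
  assumes S: "S \<subseteq> assignments n" "finite S" "shatters (H_ctx n Phi psi) S"
  shows "card S \<le> length Phi + 1"
proof (rule ccontr)
  assume "\<not> card S \<le> length Phi + 1"
  hence lt: "length Phi + 1 < card S" by simp
  define m where "m = length Phi"
  define v where "v j s = (if (Phi ! j) s then 1 else 0 :: real)" for j s
  define a where "a s j = (if j = 0 then 1 else v (j - 1) s)" for s j
  obtain l where l: "\<exists>i\<in>S. l i \<noteq> 0" "\<forall>j<m+1. (\<Sum>i\<in>S. l i * a i j) = 0"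
    using lin_dep[OF S(2), of "m+1" a] lt m_def by auto
  have sum0: "(\<Sum>s\<in>S. l s) = 0" using l(2)[rule_format, of 0] by (simp add: a_def)
  have sumv: "(\<Sum>s\<in>S. l s * v j s) = 0" if "j < m" for j
    using l(2)[rule_format, of "Suc j"] that by (simp add: a_def)
  have fwv: "fw Phi w s = (\<Sum>j<m. w j * v j s)" for w s
    by (simp add: fw_def v_def m_def)
  have shat: "\<exists>c w. \<forall>x\<in>S. maxsat_clf n Phi c w x psi = (x \<in> T)" if "T \<subseteq> S" for T
  proof -
    have "\<exists>h\<in>H_ctx n Phi psi. \<forall>x\<in>S. h x = (x \<in> T)"
      using S(3)[unfolded shatters_def, rule_format, OF that] .
    then obtain h where h: "h \<in> H_ctx n Phi psi" "\<forall>x\<in>S. h x = (x \<in> T)" ..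
    from h(1) obtain c w where "h = (\<lambda>x. maxsat_clf n Phi c w x psi)"
      unfolding H_ctx_def mem_Collect_eq by (elim exE conjE)
    then show ?thesis using h(2) by auto
  qed
  have psiS: "psi s" if "s \<in> S" for s
  proof -
    obtain c w where "\<forall>x\<in>S. maxsat_clf n Phi c w x psi = (x \<in> S)" using shat[of S] by blast
    then have "maxsat_clf n Phi c w s psi" using that by blast
    then show ?thesis unfolding maxsat_clf_def by blast
  qed
  define P where "P = {s\<in>S. l s > 0}"
  define N where "N = {s\<in>S. l s < 0}"
  have Pne: "P \<noteq> {}"
  proof
    assume "P = {}"
    hence "\<forall>s\<in>S. 0 \<le> - l s" by (force simp: P_def)
    moreover have "(\<Sum>s\<in>S. - l s) = 0" using sum0 by (simp add: sum_negf)
    ultimately have "\<forall>s\<in>S. - l s = 0" using zero_terms[OF S(2), of "\<lambda>s. - l s"] by simp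
    then show False using l(1) by auto
  qed
  have Nne: "N \<noteq> {}"
  proof
    assume "N = {}"
    hence "\<forall>s\<in>S. 0 \<le> l s" by (force simp: N_def)
    then have "\<forall>s\<in>S. l s = 0" using zero_terms[OF S(2), of l] sum0 by simp
    then show False using l(1) by auto
  qed
  obtain c w where cw: "\<forall>x\<in>S. maxsat_clf n Phi c w x psi = (x \<in> P)"
    using shat[of P] unfolding P_def by blast
  obtain s0 where s0: "s0 \<in> P" using Pne by auto
  obtain t where t: "t \<in> N" using Nne by auto
  have tS: "t \<in> S" "l t < 0" using t by (auto simp: N_def)
  have Pfeas: "hard Phi c s" "\<forall>x'\<in>assignments n. hard Phi c x' \<and> psi x' \<longrightarrow> fw Phi w x' \<le> fw Phi w s"
    if "s \<in> P" for s
    using cw that by (auto simp: P_def maxsat_clf_def)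
  have hardN: "hard Phi c t" if tN: "t \<in> N" for t
    unfolding hard_def
  proof (intro allI impI)
    fix j assume j: "j < length Phi" "c j"
    have e: "(\<Sum>s\<in>S. l s * (1 - v j s)) = 0"
      using sum0 sumv[of j] j by (simp add: m_def algebra_simps sum_subtractf)
    have nonpos: "\<forall>s\<in>S. 0 \<le> - (l s * (1 - v j s))"
    proof
      fix s assume sS: "s \<in> S"
      consider "l s > 0" | "l s = 0" | "l s < 0" by linarith
      then show "0 \<le> - (l s * (1 - v j s))"
      proof cases
        case 1 then have "s \<in> P" using sS by (simp add: P_def)
        then have "(Phi ! j) s" using Pfeas(1) j unfolding hard_def by blast
        then show ?thesis by (simp add: v_def)
      next
        case 2 then show ?thesis by simp
      next
        case 3 then show ?thesis by (simp add: v_def mult_nonpos_nonneg)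
      qed
    qed
    have "(\<Sum>s\<in>S. - (l s * (1 - v j s))) = 0" using e by (simp add: sum_negf)
    then have "\<forall>s\<in>S. - (l s * (1 - v j s)) = 0" using zero_terms[OF S(2), of "\<lambda>s. - (l s * (1 - v j s))"] nonpos by simp
    then have "l t * (1 - v j t) = 0" using tN by (auto simp: N_def)
    then show "(Phi ! j) t" using tN by (auto simp: v_def N_def split: if_splits)
  qed
  define M where "M = fw Phi w s0"
  have fwP: "fw Phi w s = M" if "s \<in> P" for s
  proof -
    have sS: "s \<in> S" "s0 \<in> S" using that s0 by (auto simp: P_def)
    have "fw Phi w s \<le> M" unfolding M_def using Pfeas(2)[OF s0] Pfeas(1)[OF that] sS S(1) psiS by auto
    moreover have "M \<le> fw Phi w s" unfolding M_def using Pfeas(2)[OF that] Pfeas(1)[OF s0] sS S(1) psiS by auto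
    ultimately show ?thesis by simp
  qed
  have tle: "fw Phi w t \<le> M" if "t \<in> N" for t
    unfolding M_def using Pfeas(2)[OF s0] hardN[OF that] that psiS S(1) by (auto simp: N_def)
  have lfw: "(\<Sum>s\<in>S. l s * fw Phi w s) = 0"
  proof -
    have "(\<Sum>s\<in>S. l s * fw Phi w s) = (\<Sum>s\<in>S. \<Sum>j<m. w j * (l s * v j s))"
      by (simp add: fwv sum_distrib_left mult.left_commute)
    also have "\<dots> = (\<Sum>j<m. w j * (\<Sum>s\<in>S. l s * v j s))"
      by (subst sum.swap) (simp add: sum_distrib_left)
    also have "\<dots> = 0" using sumv by simp
    finally show ?thesis .
  qed
  have e2: "(\<Sum>s\<in>S. - (l s * (M - fw Phi w s))) = 0"
  proof -
    have "(\<Sum>s\<in>S. - (l s * (M - fw Phi w s))) = (\<Sum>s\<in>S. l s * fw Phi w s) - M * (\<Sum>s\<in>S. l s)"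
      by (simp add: algebra_simps sum_subtractf sum_distrib_left)
    then show ?thesis using lfw sum0 by simp
  qed
  have nonneg2: "\<forall>s\<in>S. 0 \<le> - (l s * (M - fw Phi w s))"
  proof
    fix s assume sS: "s \<in> S"
    consider "l s > 0" | "l s = 0" | "l s < 0" by linarith
    then show "0 \<le> - (l s * (M - fw Phi w s))"
    proof cases
      case 1 then have "s \<in> P" using sS by (simp add: P_def)
      then show ?thesis using fwP by simp
    next
      case 2 then show ?thesis by simp
    next
      case 3
      have "s \<in> N" using 3 sS by (simp add: N_def)
      have "fw Phi w s \<le> M" using tle \<open>s \<in> N\<close> by blast
      then show ?thesis using 3 by (simp add: mult_nonpos_nonneg)
    qed
  qed
  have "\<forall>s\<in>S. - (l s * (M - fw Phi w s)) = 0"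
    using zero_terms[OF S(2), of "\<lambda>s. - (l s * (M - fw Phi w s))"] nonneg2 e2 by simp
  then have "l t * (M - fw Phi w t) = 0" using tS by auto
  then have ft: "fw Phi w t = M" using tS by simp
  have "maxsat_clf n Phi c w t psi"
    unfolding maxsat_clf_def using hardN[OF t] tS S(1) psiS Pfeas(2)[OF s0] ft M_def by auto
  then have "t \<in> P" using cw tS by auto
  then show False using tS by (simp add: P_def)
qed

lemma VC_bound:
  "VC_dim (assignments n) (H_ctx n Phi psi) \<le> length Phi + 1"
proof -
  let ?X = "{card S | S. S \<subseteq> assignments n \<and> finite S \<and> shatters (H_ctx n Phi psi) S}"
  have "(\<lambda>x. maxsat_clf n Phi (\<lambda>_. False) (\<lambda>_. 0) x psi) \<in> H_ctx n Phi psi"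
    unfolding H_ctx_def mem_Collect_eq by (intro exI[of _ "\<lambda>_. False"] exI[of _ "\<lambda>_. 0"]) simp
  then have "shatters (H_ctx n Phi psi) {}" unfolding shatters_def by blast
  then have "card {} \<in> ?X" unfolding mem_Collect_eq by (intro exI[of _ "{}"]) simp
  then have ne: "?X \<noteq> {}" by blast
  have "Sup ?X \<le> length Phi + 1"
  proof (rule cSup_least[OF ne])
    fix x assume "x \<in> ?X"
    then obtain S where S: "x = card S" "S \<subseteq> assignments n" "finite S" "shatters (H_ctx n Phi psi) S"
      unfolding mem_Collect_eq by (elim exE conjE)
    show "x \<le> length Phi + 1" using shattered_bound[OF S(2-4)] S(1) by simp
  qed
  then show ?thesis unfolding VC_dim_def .
qed

theorem theorem2:
  shows "\<exists>u::real. u < 5 \<and>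
    (\<forall>(n::nat) (Phi :: (bool list \<Rightarrow> bool) list) (psi :: bool list \<Rightarrow> bool).
       real (VC_dim (assignments n) (H_ctx n Phi psi)) \<le> u * (2 * real (length Phi) + 1))"
proof (intro exI[of _ 1] conjI allI)
  fix n Phi psi
  have "VC_dim (assignments n) (H_ctx n Phi psi) \<le> length Phi + 1" by (rule VC_bound)
  then have "real (VC_dim (assignments n) (H_ctx n Phi psi)) \<le> real (length Phi) + 1" by linarith
  then show "real (VC_dim (assignments n) (H_ctx n Phi psi)) \<le> 1 * (2 * real (length Phi) + 1)" by simp
qed simp

end
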